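(* Let $d\ge2$, $\varepsilon\ge1$, $s=\lceil d/(1+e^\varepsilon)\rceil$. Let $q^{\mathrm{ss}}$ be the $\varepsilon$-LDP $\texttt{Subset Selection}$ mechanism with estimator $\hat{\mathbf{x}}^{\mathrm{ss}}=(\mathbf{z}-b_{\mathrm{ss}}\mathbf{1})/m_{\mathrm{ss}}$, and let $q^{\mathrm{mrc}}$ be the MRC mechanism simulating it with $N$ candidates and estimator $\hat{\mathbf{x}}^{\mathrm{mrc}}=(\mathbf{z}_K-b_{\mathrm{mrc}}\mathbf{1})/m_{\mathrm{mrc}}$. Let $\lambda>0$. If \[ N\ge\frac{2(e^\varepsilon+3)^2(1+\lambda)^2}{0.24^2\lambda^2}\ln\Big(\frac{8(1+\lambda)}{0.24\lambda}\Big), \] then for every $\mathbf{x}\in\{e_1,\dots,e_d\}$, \[ \mathbb{E}_{q^{\mathrm{mrc}}}\big[\|\hat{\mathbf{x}}^{\mathrm{mrc}}-\mathbf{x}\|_2^2\big]\le(1+4\lambda+5\lambda^2+2\lambda^3)\,\mathbb{E}_{q^{\mathrm{ss}}}\big[\|\hat{\mathbf{x}}^{\mathrm{ss}}-\mathbf{x}\|_2^2\big]. \]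
   Context: $\texttt{Subset Selection}$: inputs $\{e_1,\dots,e_d\}$ (standard basis); outputs $\mathcal{Z}=\{\mathbf{z}\in\{0,1\}^d:\sum_iz_i=s\}$; for $\mathbf{x}=e_j$, $q^{\mathrm{ss}}(\mathbf{z}\mid\mathbf{x})=\frac{e^\varepsilon}{\binom{d-1}{s-1}e^\varepsilon+\binom{d-1}{s}}$ if $z_j=1$ and $\frac{1}{\binom{d-1}{s-1}e^\varepsilon+\binom{d-1}{s}}$ otherwise; $m_{\mathrm{ss}}=\frac{s(d-s)(e^\varepsilon-1)}{(d-1)(s(e^\varepsilon-1)+d)}$, $b_{\mathrm{ss}}=\frac{s((s-1)e^\varepsilon+(d-s))}{(d-1)(s(e^\varepsilon-1)+d)}$; $\mathbf{1}$ is the all-ones vector. MRC: draw $\mathbf{z}_1,\dots,\mathbf{z}_N$ i.i.d. uniform on $\mathcal{Z}$, $\pi^{\mathrm{mrc}}(k)=q^{\mathrm{ss}}(\mathbf{z}_k\mid\mathbf{x})/\sum_{k'}q^{\mathrm{ss}}(\mathbf{z}_{k'}\mid\mathbf{x})$, $K\sim\pi^{\mathrm{mrc}}$. Let $\theta$ be a random variable with $N\theta\sim\mathrm{Binom}(N,s/d)$ and define $m_{\mathrm{mrc}}=\mathbb{E}\big[\frac{\theta e^\varepsilon}{e^\varepsilon\theta+(1-\theta)}\big]-\frac{1}{d-1}\mathbb{E}\big[s-\frac{e^\varepsilon\theta}{e^\varepsilon\theta+(1-\theta)}\big]$ and $b_{\mathrm{mrc}}=\frac{1}{d-1}\mathbb{E}\big[s-\frac{e^\varepsilon\theta}{e^\varepsilon\theta+(1-\theta)}\big]$.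 Expectations under $q^{\mathrm{mrc}}$ are over the candidates and $K$. *)

theory Defs
  imports Complex_Main "HOL-Library.FuncSet"
begin

text \<open>Coordinates are indexed by 0..d-1; the input e_j is represented by j < d.
  An output z in {0,1}^d with s ones is represented by its support S.\<close>

definition ss_size :: "nat \<Rightarrow> real \<Rightarrow> nat" where
  "ss_size d \<epsilon> = nat \<lceil>real d / (1 + exp \<epsilon>)\<rceil>"

definition ss_Z :: "nat \<Rightarrow> nat \<Rightarrow> nat set set" where
  "ss_Z d s = {S. S \<subseteq> {..<d} \<and> card S = s}"

definition q_ss :: "nat \<Rightarrow> nat \<Rightarrow> real \<Rightarrow> nat \<Rightarrow> nat set \<Rightarrow> real" where
  "q_ss d s \<epsilon> j S = (if j \<in> S then exp \<epsilon> else 1) /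
     (real ((d - 1) choose (s - 1)) * exp \<epsilon> + real ((d - 1) choose s))"

definition m_ss :: "nat \<Rightarrow> nat \<Rightarrow> real \<Rightarrow> real" where
  "m_ss d s \<epsilon> = real s * (real d - real s) * (exp \<epsilon> - 1) /
     ((real d - 1) * (real s * (exp \<epsilon> - 1) + real d))"

definition b_ss :: "nat \<Rightarrow> nat \<Rightarrow> real \<Rightarrow> real" where
  "b_ss d s \<epsilon> = real s * ((real s - 1) * exp \<epsilon> + (real d - real s)) /
     ((real d - 1) * (real s * (exp \<epsilon> - 1) + real d))"

definition sq_err :: "nat \<Rightarrow> nat \<Rightarrow> real \<Rightarrow> real \<Rightarrow> nat set \<Rightarrow> real" where
  "sq_err d j m b S = (\<Sum>i<d. ((of_bool (i \<in> S) - b) / m - of_bool (i = j))\<^sup>2)"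

definition E_ss :: "nat \<Rightarrow> nat \<Rightarrow> real \<Rightarrow> nat \<Rightarrow> real" where
  "E_ss d s \<epsilon> j = (\<Sum>S\<in>ss_Z d s. q_ss d s \<epsilon> j S * sq_err d j (m_ss d s \<epsilon>) (b_ss d s \<epsilon>) S)"

definition binom_exp :: "nat \<Rightarrow> real \<Rightarrow> (real \<Rightarrow> real) \<Rightarrow> real" where
  "binom_exp N p f = (\<Sum>k\<le>N. real (N choose k) * p ^ k * (1 - p) ^ (N - k) * f (real k / real N))"

definition m_mrc :: "nat \<Rightarrow> nat \<Rightarrow> real \<Rightarrow> nat \<Rightarrow> real" where
  "m_mrc d s \<epsilon> N =
     binom_exp N (real s / real d) (\<lambda>\<theta>. \<theta> * exp \<epsilon> / (exp \<epsilon> * \<theta> + (1 - \<theta>)))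
     - 1 / (real d - 1) *
       binom_exp N (real s / real d) (\<lambda>\<theta>. real s - exp \<epsilon> * \<theta> / (exp \<epsilon> * \<theta> + (1 - \<theta>)))"

definition b_mrc :: "nat \<Rightarrow> nat \<Rightarrow> real \<Rightarrow> nat \<Rightarrow> real" where
  "b_mrc d s \<epsilon> N =
     1 / (real d - 1) *
       binom_exp N (real s / real d) (\<lambda>\<theta>. real s - exp \<epsilon> * \<theta> / (exp \<epsilon> * \<theta> + (1 - \<theta>)))"

text \<open>MRC: candidates zs k (k < N) i.i.d. uniform on ss_Z d s, index K chosen with
  probability q_ss(zs K)/sum_k q_ss(zs k); expectation over candidates and K.\<close>
definition E_mrc :: "nat \<Rightarrow> nat \<Rightarrow> real \<Rightarrow> nat \<Rightarrow> nat \<Rightarrow> real" where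
  "E_mrc d s \<epsilon> N j =
     (\<Sum>zs\<in>PiE {..<N} (\<lambda>_. ss_Z d s).
        \<Sum>k<N. q_ss d s \<epsilon> j (zs k) / (\<Sum>k'<N. q_ss d s \<epsilon> j (zs k'))
               * sq_err d j (m_mrc d s \<epsilon> N) (b_mrc d s \<epsilon> N) (zs k))
     / real (card (ss_Z d s)) ^ N"

end

theory Submission
  imports Defs
begin

definition bsum :: "nat \<Rightarrow> real \<Rightarrow> real \<Rightarrow> (nat \<Rightarrow> real) \<Rightarrow> real" where
  "bsum N a b h = (\<Sum>k\<le>N. real (N choose k) * a ^ k * b ^ (N - k) * h k)"

lemma bsum_Suc: "bsum (Suc N) a b h = bsum N a b (\<lambda>k. a * h (Suc k) + b * h k)"
proof -
  have L: "bsum (Suc N) a b h = b ^ Suc N * h 0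
      + (\<Sum>i\<le>N. real (N choose i) * a ^ Suc i * b ^ (N - i) * h (Suc i))
      + (\<Sum>i\<le>N. real (N choose Suc i) * a ^ Suc i * b ^ (N - i) * h (Suc i))"
    unfolding bsum_def
    by (subst sum.atMost_Suc_shift) (simp add: sum.distrib distrib_right del: sum.atMost_Suc)
  have "b ^ Suc N * h 0 + (\<Sum>i\<le>N. real (N choose Suc i) * a ^ Suc i * b ^ (N - i) * h (Suc i))
       = (\<Sum>k\<le>Suc N. real (N choose k) * a ^ k * b ^ (Suc N - k) * h k)"
    by (rule sym, subst sum.atMost_Suc_shift) (simp del: sum.atMost_Suc)
  also have "\<dots> = (\<Sum>k\<le>N. real (N choose k) * a ^ k * b ^ (Suc N - k) * h k)"
    by simp
  finally have R: "b ^ Suc N * h 0 + (\<Sum>i\<le>N. real (N choose Suc i) * a ^ Suc i * b ^ (N - i) * h (Suc i))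
       = (\<Sum>k\<le>N. real (N choose k) * a ^ k * b ^ (Suc N - k) * h k)" .
  have "bsum N a b (\<lambda>k. a * h (Suc k) + b * h k) =
     (\<Sum>i\<le>N. real (N choose i) * a ^ Suc i * b ^ (N - i) * h (Suc i))
     + (\<Sum>k\<le>N. real (N choose k) * a ^ k * b ^ (Suc N - k) * h k)"
    unfolding bsum_def
    by (auto simp: sum.distrib algebra_simps Suc_diff_le intro!: sum.cong)
  then show ?thesis using L R by linarith
qed

lemma bsum_lin: "bsum N a b (\<lambda>k. x * h1 k + y * h2 k) = x * bsum N a b h1 + y * bsum N a b h2"
  unfolding bsum_def by (simp add: sum.distrib sum_distrib_left algebra_simps)

lemma bsum_add: "bsum N a b (\<lambda>k. f k + g k) = bsum N a b f + bsum N a b g"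
  unfolding bsum_def by (simp add: sum.distrib algebra_simps)

lemma bsum_cmult: "bsum N a b (\<lambda>k. c * f k) = c * bsum N a b f"
  unfolding bsum_def by (simp add: sum_distrib_left algebra_simps)

lemma bsum_const: "a + b = 1 \<Longrightarrow> bsum N a b (\<lambda>k. c) = c"
proof -
  assume "a + b = 1"
  have "bsum N a b (\<lambda>k. c) = c * (a + b) ^ N"
    unfolding bsum_def binomial_ring by (simp add: sum_distrib_left algebra_simps)
  then show ?thesis using \<open>a + b = 1\<close> by simp
qed

lemma bsum_mono: "a \<ge> 0 \<Longrightarrow> b \<ge> 0 \<Longrightarrow> (\<And>k. k \<le> N \<Longrightarrow> h1 k \<le> h2 k) \<Longrightarrow> bsum N a b h1 \<le> bsum N a b h2"
  unfolding bsum_def by (intro sum_mono mult_left_mono) auto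

lemma bsum_cong: "(\<And>k. k \<le> N \<Longrightarrow> h1 k = h2 k) \<Longrightarrow> bsum N a b h1 = bsum N a b h2"
  unfolding bsum_def by (intro sum.cong) auto

lemma bsum_m1: "a + b = 1 \<Longrightarrow> bsum N a b real = real N * a"
proof (induction N)
  case 0 then show ?case by (simp add: bsum_def)
next
  case (Suc N)
  from Suc.prems have hb: "b = 1 - a" by simp
  have "bsum (Suc N) a b real = bsum N a b (\<lambda>k. 1 * real k + a * 1)"
    unfolding bsum_Suc using Suc.prems by (intro bsum_cong) (simp add: hb algebra_simps)
  also have "\<dots> = real N * a + a" using Suc by (simp only: bsum_lin) (simp add: bsum_const[OF Suc.prems])
  finally show ?case by (simp add: algebra_simps)
qed

lemma bsum_m2: "a + b = 1 \<Longrightarrow> bsum N a b (\<lambda>k. (real k)^2) = real N * a * b + (real N)^2 * a^2"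
proof (induction N)
  case 0 then show ?case by (simp add: bsum_def)
next
  case (Suc N)
  from Suc.prems have hb: "b = 1 - a" by simp
  have "bsum (Suc N) a b (\<lambda>k. (real k)^2) = bsum N a b (\<lambda>k. 1 * (real k)^2 + (2*a) * real k + a * 1)"
    unfolding bsum_Suc using Suc.prems by (intro bsum_cong) (simp add: hb algebra_simps power2_eq_square)
  also have "\<dots> = real N * a * b + (real N)^2 * a^2 + 2 * a * (real N * a) + a"
    using Suc by (simp add: bsum_add bsum_cmult bsum_const[OF Suc.prems] bsum_m1[OF Suc.prems])
  finally show ?case by (simp add: hb algebra_simps power2_eq_square)
qed

lemma card_upd_count:
  "card {k. k < Suc N \<and> P ((g(N := y)) k)} = card {k. k < N \<and> P (g k)} + (if P y then 1 else 0)"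
proof -
  have e: "{k. k < Suc N \<and> P ((g(N := y)) k)} = {k. k < N \<and> P (g k)} \<union> (if P y then {N} else {})"
    by (auto simp: less_Suc_eq)
  show ?thesis unfolding e by (simp add: card_Un_disjoint)
qed

lemma sum_split_count:
  assumes "finite Z"
  shows "(\<Sum>y\<in>Z. h (c + (if P y then 1 else 0))) =
     real (card {z\<in>Z. P z}) * h (Suc c) + real (card {z\<in>Z. \<not> P z}) * h c"
proof -
  have "(\<Sum>y\<in>Z. h (c + (if P y then 1 else 0))) = (\<Sum>y\<in>Z. if P y then h (Suc c) else h c)"
    by (intro sum.cong) auto
  also have "\<dots> = (\<Sum>y\<in>{z\<in>Z. P z}. h (Suc c)) + (\<Sum>y\<in>{z\<in>Z. \<not> P z}. h c)"
    using assms by (simp add: sum.If_cases Int_def)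
  finally show ?thesis by simp
qed

lemma pie_count:
  assumes "finite Z"
  shows "(\<Sum>zs\<in>PiE {..<N} (\<lambda>_. Z). h (card {k. k < N \<and> P (zs k)}))
    = bsum N (real (card {z\<in>Z. P z})) (real (card {z\<in>Z. \<not> P z})) h"
proof (induction N arbitrary: h)
  case 0
  then show ?case by (simp add: bsum_def)
next
  case (Suc N)
  let ?a = "real (card {z\<in>Z. P z})" and ?b = "real (card {z\<in>Z. \<not> P z})"
  let ?Pi = "PiE {..<N} (\<lambda>_. Z)"
  have e: "PiE {..<Suc N} (\<lambda>_. Z) = (\<lambda>(y, g). g(N := y)) ` (Z \<times> ?Pi)"
    by (simp add: lessThan_Suc PiE_insert_eq)
  have inj: "inj_on (\<lambda>(y, g). g(N := y)) (Z \<times> ?Pi)"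
    using inj_combinator[of N "{..<N}" "\<lambda>_. Z"] by simp
  have "(\<Sum>zs\<in>PiE {..<Suc N} (\<lambda>_. Z). h (card {k. k < Suc N \<and> P (zs k)}))
      = (\<Sum>(y,g)\<in>Z \<times> ?Pi. h (card {k. k < Suc N \<and> P ((g(N := y)) k)}))"
    unfolding e by (subst sum.reindex[OF inj]) (simp add: case_prod_beta)
  also have "\<dots> = (\<Sum>y\<in>Z. \<Sum>g\<in>?Pi. h (card {k. k < N \<and> P (g k)} + (if P y then 1 else 0)))"
    unfolding sum.cartesian_product by (intro sum.cong refl) (simp only: card_upd_count split: prod.splits)
  also have "\<dots> = (\<Sum>g\<in>?Pi. \<Sum>y\<in>Z. h (card {k. k < N \<and> P (g k)} + (if P y then 1 else 0)))"
    by (rule sum.swap)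
  also have "\<dots> = (\<Sum>g\<in>?Pi. ?a * h (Suc (card {k. k < N \<and> P (g k)})) + ?b * h (card {k. k < N \<and> P (g k)}))"
    by (simp add: sum_split_count[OF assms])
  also have "\<dots> = bsum N ?a ?b (\<lambda>c. ?a * h (Suc c) + ?b * h c)"
    by (rule Suc.IH)
  also have "\<dots> = bsum (Suc N) ?a ?b h" by (simp add: bsum_Suc)
  finally show ?case .
qed

lemma sq_err_eq:
  assumes "S \<subseteq> {..<d}" "j < d"
  shows "sq_err d j m b S = (real (card S) * (1 - 2*b) + real d * b^2) / m^2
           - 2 * (of_bool (j \<in> S) - b) / m + 1"
proof -
  have pt: "((of_bool (i \<in> S) - b) / m - of_bool (i = j))^2 =
     (of_bool (i \<in> S) * (1 - 2*b) + b^2) / m^2 - (if i = j then 2 * (of_bool (j \<in> S) - b) / m - 1 else 0)"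
    for i
    by (cases "m = 0"; cases "i \<in> S"; cases "i = j") (simp_all add: field_simps power2_eq_square)
  have "sq_err d j m b S = (\<Sum>i<d. (of_bool (i \<in> S) * (1 - 2*b) + b^2) / m^2)
      - (\<Sum>i<d. (if i = j then 2 * (of_bool (j \<in> S) - b) / m - 1 else 0))"
    unfolding sq_err_def pt by (simp add: sum_subtractf)
  also have "(\<Sum>i<d. (of_bool (i \<in> S) * (1 - 2*b) + b^2) / m^2)
     = (real (card S) * (1 - 2*b) + real d * b^2) / m^2"
  proof -
    have "{..<d} \<inter> {i. i \<in> S} = S" using assms by auto
    then show ?thesis
      by (simp add: sum_divide_distrib[symmetric] sum.distrib sum_distrib_right[symmetric])
  qed
  also have "(\<Sum>i<d. (if i = j then 2 * (of_bool (j \<in> S) - b) / m - 1 else 0))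
      = 2 * (of_bool (j \<in> S) - b) / m - 1"
    using assms by simp
  finally show ?thesis by simp
qed

definition alph :: "nat \<Rightarrow> nat \<Rightarrow> real \<Rightarrow> real \<Rightarrow> real" where
  "alph d s m b = (real s * (1 - 2*b) + real d * b^2) / m^2 + 2 * b / m + 1"

lemma sq_err_alph:
  assumes "S \<in> ss_Z d s" "j < d"
  shows "sq_err d j m b S = alph d s m b - 2 * of_bool (j \<in> S) / m"
proof -
  have "S \<subseteq> {..<d}" "card S = s" using assms by (auto simp: ss_Z_def)
  then show ?thesis using sq_err_eq[OF _ assms(2), of S m b]
    by (simp add: alph_def diff_divide_distrib)
qed

lemma Z_facts:
  assumes "j < d" "1 \<le> s"
  shows "finite (ss_Z d s)" "card (ss_Z d s) = d choose s"
    "card {S\<in>ss_Z d s. j \<in> S} = (d-1) choose (s-1)"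
    "card {S\<in>ss_Z d s. j \<notin> S} = (d-1) choose s"
proof -
  show fin: "finite (ss_Z d s)" unfolding ss_Z_def
    by (rule finite_subset[of _ "Pow {..<d}"]) auto
  show c: "card (ss_Z d s) = d choose s" unfolding ss_Z_def using n_subsets[of "{..<d}" s] by simp
  have "{S\<in>ss_Z d s. j \<notin> S} = {S. S \<subseteq> {..<d} - {j} \<and> card S = s}"
    unfolding ss_Z_def by auto
  then show cn: "card {S\<in>ss_Z d s. j \<notin> S} = (d-1) choose s"
    using n_subsets[of "{..<d} - {j}" s] assms by simp
  have "card {S\<in>ss_Z d s. j \<in> S} + card {S\<in>ss_Z d s. j \<notin> S} = card (ss_Z d s)"
    using fin by (subst card_Un_disjoint[symmetric]) (auto intro: arg_cong[where f=card])
  moreover obtain n t where "d = Suc n" "s = Suc t" using assms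
    by (metis Suc_le_D less_imp_Suc_add One_nat_def)
  ultimately show "card {S\<in>ss_Z d s. j \<in> S} = (d-1) choose (s-1)"
    using c cn by simp
qed

lemma sum_ite_split:
  assumes "finite A"
  shows "(\<Sum>x\<in>A. if P x then u else v) = real (card {x\<in>A. P x}) * u + real (card {x\<in>A. \<not> P x}) * v"
proof -
  have "(\<Sum>x\<in>A. if P x then u else v) = (\<Sum>x\<in>{x\<in>A. P x}. u) + (\<Sum>x\<in>{x\<in>A. \<not> P x}. v)"
    using assms by (simp add: sum.If_cases Int_def)
  then show ?thesis by simp
qed

lemma E_ss_closed:
  assumes "j < d" "1 \<le> s" and sd: "s < d"
  defines "cy \<equiv> real ((d-1) choose (s-1))" and "cn \<equiv> real ((d-1) choose s)"
  shows "E_ss d s \<epsilon> j = alph d s (m_ss d s \<epsilon>) (b_ss d s \<epsilon>)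
      - 2 / m_ss d s \<epsilon> * (cy * exp \<epsilon> / (cy * exp \<epsilon> + cn))"
proof -
  let ?m = "m_ss d s \<epsilon>" and ?b = "b_ss d s \<epsilon>" and ?Q = "cy * exp \<epsilon> + cn"
  let ?al = "alph d s ?m ?b"
  have cypos: "cy > 0" unfolding cy_def using assms sd by simp
  have Qpos: "?Q > 0" using cypos by (simp add: cn_def add_pos_nonneg)
  have "E_ss d s \<epsilon> j = (\<Sum>S\<in>ss_Z d s. if j \<in> S then exp \<epsilon> / ?Q * (?al - 2 / ?m) else ?al / ?Q)"
    unfolding E_ss_def q_ss_def cy_def[symmetric] cn_def[symmetric]
    by (intro sum.cong refl) (auto simp: sq_err_alph[OF _ assms(1)])
  also have "\<dots> = cy * (exp \<epsilon> / ?Q * (?al - 2 / ?m)) + cn * (?al / ?Q)"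
    unfolding sum_ite_split[OF Z_facts(1)[OF assms(1,2)]] Z_facts(3,4)[OF assms(1,2)] cy_def cn_def ..
  also have "\<dots> = ?al * (?Q / ?Q) - 2 / ?m * (cy * exp \<epsilon> / ?Q)"
    by (simp only: divide_inverse algebra_simps)
  also have "?Q / ?Q = 1" using Qpos by simp
  finally show ?thesis by simp
qed

lemma bsum_scale:
  assumes "M \<noteq> 0"
  shows "bsum N a b h / M ^ N = bsum N (a / M) (b / M) h"
  unfolding bsum_def sum_divide_distrib
proof (intro sum.cong refl)
  fix k assume "k \<in> {..N}"
  then have "M ^ N = M ^ k * M ^ (N - k)" by (simp flip: power_add)
  then show "real (N choose k) * a ^ k * b ^ (N - k) * h k / M ^ N =
        real (N choose k) * (a / M) ^ k * (b / M) ^ (N - k) * h k"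
    using assms by (simp add: power_divide)
qed

lemma F_eq:
  fixes c e N :: real
  assumes "N > 0"
  shows "c / N * e / (e * (c / N) + (1 - c / N)) = c * e / (c * e + (N - c))"
proof -
  have 1: "e * (c / N) + (1 - c / N) = (c * e + (N - c)) / N" using assms by (simp add: field_simps)
  have 2: "c / N * e = (c * e) / N" by simp
  show ?thesis
  proof (cases "c * e + (N - c) = 0")
    case True then show ?thesis unfolding 1 2 by simp
  next
    case False then show ?thesis unfolding 1 2 using assms by (simp add: field_simps)
  qed
qed

lemma inner_mrc:
  assumes "j < d" "zs \<in> PiE {..<N} (\<lambda>_. ss_Z d s)" "N > 0" "\<epsilon> \<ge> 0"
    and Qpos: "real ((d - 1) choose (s - 1)) * exp \<epsilon> + real ((d - 1) choose s) > 0"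
  shows "(\<Sum>k<N. q_ss d s \<epsilon> j (zs k) / (\<Sum>k'<N. q_ss d s \<epsilon> j (zs k')) * sq_err d j m b (zs k))
    = alph d s m b - 2 / m * ((\<lambda>\<theta>. \<theta> * exp \<epsilon> / (exp \<epsilon> * \<theta> + (1 - \<theta>))) (real (card {k. k < N \<and> j \<in> zs k}) / real N))"
proof -
  let ?Q = "real ((d - 1) choose (s - 1)) * exp \<epsilon> + real ((d - 1) choose s)"
  let ?c = "card {k. k < N \<and> j \<in> zs k}"
  let ?al = "alph d s m b"
  let ?e = "exp \<epsilon>"
  have cN: "card {k. k < N \<and> j \<notin> zs k} = N - ?c"
  proof -
    have "{k. k < N \<and> j \<notin> zs k} = {..<N} - {k. k < N \<and> j \<in> zs k}" by auto
    then show ?thesis by (simp only:) (subst card_Diff_subset, auto)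
  qed
  have cle: "?c \<le> N" by (rule order_trans[OF card_mono[of "{..<N}"]]) auto
  have S: "(\<Sum>k'<N. q_ss d s \<epsilon> j (zs k')) = (real ?c * ?e + (real N - real ?c)) / ?Q"
  proof -
    have "(\<Sum>k'<N. q_ss d s \<epsilon> j (zs k')) = (\<Sum>k'<N. if j \<in> zs k' then ?e / ?Q else 1 / ?Q)"
      unfolding q_ss_def by (intro sum.cong) auto
    also have "\<dots> = real ?c * (?e / ?Q) + real (N - ?c) * (1 / ?Q)"
      by (subst sum_ite_split) (simp_all add: cN)
    finally show ?thesis using cle by (simp add: of_nat_diff add_divide_distrib)
  qed
  have Spos: "real ?c * ?e + (real N - real ?c) > 0"
  proof -
    have "1 \<le> ?e" using assms by simp
    then have "real ?c * ?e \<ge> real ?c" by (metis mult.right_neutral mult_left_mono of_nat_0_le_iff)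
    then show ?thesis using \<open>N > 0\<close> by linarith
  qed
  have "(\<Sum>k<N. q_ss d s \<epsilon> j (zs k) / (\<Sum>k'<N. q_ss d s \<epsilon> j (zs k')) * sq_err d j m b (zs k))
     = (\<Sum>k<N. if j \<in> zs k then ?e / (real ?c * ?e + (real N - real ?c)) * (?al - 2 / m)
              else ?al / (real ?c * ?e + (real N - real ?c)))"
  proof (intro sum.cong refl)
    fix k assume "k \<in> {..<N}"
    then have "zs k \<in> ss_Z d s" using assms(2) by auto
    then show "q_ss d s \<epsilon> j (zs k) / (\<Sum>k'<N. q_ss d s \<epsilon> j (zs k')) * sq_err d j m b (zs k) =
       (if j \<in> zs k then ?e / (real ?c * ?e + (real N - real ?c)) * (?al - 2 / m)
              else ?al / (real ?c * ?e + (real N - real ?c)))"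
    proof -
      have sq: "sq_err d j m b (zs k) = ?al - 2 * of_bool (j \<in> zs k) / m"
        by (rule sq_err_alph[OF _ assms(1)]) fact
      show ?thesis unfolding S sq unfolding q_ss_def using Qpos Spos by (auto simp: divide_simps)
    qed
  qed
  also have "\<dots> = real ?c * (?e / (real ?c * ?e + (real N - real ?c)) * (?al - 2 / m))
      + real (N - ?c) * (?al / (real ?c * ?e + (real N - real ?c)))"
    by (subst sum_ite_split) (simp_all add: cN)
  also have "\<dots> = ?al * ((real ?c * ?e + (real N - real ?c)) / (real ?c * ?e + (real N - real ?c)))
       - 2 / m * (real ?c * ?e / (real ?c * ?e + (real N - real ?c)))"
    using cle by (simp only: of_nat_diff divide_inverse algebra_simps)
  also have "real ?c * ?e / (real ?c * ?e + (real N - real ?c)) =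
      (\<lambda>\<theta>. \<theta> * exp \<epsilon> / (exp \<epsilon> * \<theta> + (1 - \<theta>))) (real ?c / real N)"
  proof -
    have "real N > 0" using \<open>N > 0\<close> by simp
    then show ?thesis by (simp only: F_eq[of "real N" "real ?c" ?e])
  qed
  finally show ?thesis using Spos by simp
qed

lemma binom_exp_bsum: "binom_exp N p f = bsum N p (1 - p) (\<lambda>k. f (real k / real N))"
  unfolding binom_exp_def bsum_def ..

lemma choose_facts:
  assumes "1 \<le> s" "s < d"
  shows "real ((d-1) choose (s-1)) * real d = real (d choose s) * real s"
    "real ((d-1) choose (s-1)) + real ((d-1) choose s) = real (d choose s)"
    "real (d choose s) > 0"
proof -
  obtain n t where nt: "d = Suc n" "s = Suc t" using assms
    by (metis Suc_le_D less_imp_Suc_add One_nat_def)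
  show "real ((d-1) choose (s-1)) * real d = real (d choose s) * real s"
    using Suc_times_binomial_eq[of n t] unfolding nt
    by (metis diff_Suc_1 mult.commute of_nat_mult)
  show "real ((d-1) choose (s-1)) + real ((d-1) choose s) = real (d choose s)"
    unfolding nt by simp
  show "real (d choose s) > 0" using assms by simp
qed

lemma E_mrc_closed:
  assumes "j < d" "1 \<le> s" "s < d" "N > 0" "\<epsilon> \<ge> 0"
  shows "E_mrc d s \<epsilon> N j = alph d s (m_mrc d s \<epsilon> N) (b_mrc d s \<epsilon> N)
     - 2 / m_mrc d s \<epsilon> N * binom_exp N (real s / real d) (\<lambda>\<theta>. \<theta> * exp \<epsilon> / (exp \<epsilon> * \<theta> + (1 - \<theta>)))"
proof -
  let ?m = "m_mrc d s \<epsilon> N" and ?b = "b_mrc d s \<epsilon> N"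
  let ?al = "alph d s ?m ?b"
  let ?F = "\<lambda>\<theta>. \<theta> * exp \<epsilon> / (exp \<epsilon> * \<theta> + (1 - \<theta>))"
  let ?H = "\<lambda>c. ?al + (- 2 / ?m) * ?F (real c / real N)"
  let ?Z = "ss_Z d s"
  let ?M = "real (card ?Z)"
  have cy: "card {z\<in>?Z. j \<in> z} = (d-1) choose (s-1)" and cn: "card {z\<in>?Z. j \<notin> z} = (d-1) choose s"
    and cZ: "card ?Z = d choose s" and fin: "finite ?Z"
    using Z_facts[OF assms(1,2)] by auto
  note cf = choose_facts[OF assms(2,3)]
  have Qpos: "real ((d - 1) choose (s - 1)) * exp \<epsilon> + real ((d - 1) choose s) > 0"
    using assms by (intro add_pos_nonneg) auto
  have "E_mrc d s \<epsilon> N j = (\<Sum>zs\<in>PiE {..<N} (\<lambda>_. ?Z). ?H (card {k. k < N \<and> j \<in> zs k})) / ?M ^ N"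
    unfolding E_mrc_def
    by (intro arg_cong2[where f="(/)"] sum.cong refl)
       (subst inner_mrc[OF assms(1) _ assms(4,5) Qpos], assumption, simp only: minus_divide_left[symmetric] mult_minus_left diff_conv_add_uminus)
  also have "\<dots> = bsum N (real (card {z\<in>?Z. j \<in> z})) (real (card {z\<in>?Z. j \<notin> z})) ?H / ?M ^ N"
    by (subst pie_count[OF fin]) (rule refl)
  also have "\<dots> = bsum N (real (card {z\<in>?Z. j \<in> z}) / ?M) (real (card {z\<in>?Z. j \<notin> z}) / ?M) ?H"
    using cf cZ by (intro bsum_scale) simp
  also have "real (card {z\<in>?Z. j \<in> z}) / ?M = real s / real d"
    using cf assms unfolding cy cZ by (simp add: field_simps)
  also have "real (card {z\<in>?Z. j \<notin> z}) / ?M = 1 - real s / real d"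
  proof -
    have e1: "real ((d-1) choose s) = real (d choose s) - real ((d-1) choose (s-1))" using cf(2) by linarith
    have "real d * real ((d-1) choose (s-1)) = real s * real (d choose s)" using cf(1) by (simp add: mult.commute)
    then show ?thesis using cf assms unfolding cn cZ e1 by (simp add: field_simps)
  qed
  also have "bsum N (real s / real d) (1 - real s / real d) ?H
      = ?al + (- 2 / ?m) * binom_exp N (real s / real d) ?F"
    unfolding binom_exp_bsum bsum_add bsum_cmult bsum_const[of "real s / real d" "1 - real s / real d", simplified] ..
  finally show ?thesis by simp
qed

lemma bsum_quad:
  assumes "a + b = 1"
  shows "bsum N a b (\<lambda>k. A + B * real k + C * (real k)^2) = A + B * (real N * a) + C * (real N * a * b + (real N)^2 * a^2)"
  by (simp add: bsum_add bsum_cmult bsum_const[OF assms] bsum_m1[OF assms] bsum_m2[OF assms])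

lemma tangent_identity0:
  fixes e mu th u v :: real
  assumes "u > 0" "v > 0" "u = 1 + (e - 1) * th" "v = 1 + (e - 1) * mu"
  shows "mu * e / v + e / v^2 * (th - mu) - th * e / u = (e - 1) * e * (th - mu)^2 / (u * v^2)"
proof -
  have "mu * e / v + e / v^2 * (th - mu) - th * e / u = (mu * e * u * v + e * u * (th - mu) - th * e * v^2) / (u * v^2)"
    using assms(1,2) by (simp add: field_simps power2_eq_square)
  also have "mu * e * u * v + e * u * (th - mu) - th * e * v^2 = (e - 1) * e * (th - mu)^2"
    unfolding assms(3,4) by (simp add: algebra_simps power2_eq_square)
  finally show ?thesis .
qed

lemma tangent_identity:
  fixes e mu th :: real
  assumes "e \<ge> 1" "0 \<le> th" "th \<le> 1" "0 \<le> mu" "mu \<le> 1"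
  shows "mu * e / (e * mu + (1 - mu)) + e / (1 + (e - 1) * mu)^2 * (th - mu) - th * e / (e * th + (1 - th))
      = (e - 1) * e * (th - mu)^2 / ((1 + (e - 1) * th) * (1 + (e - 1) * mu)^2)"
proof -
  have p1: "1 + (e - 1) * th > 0" using assms by (smt (verit) mult_nonneg_nonneg)
  have p2: "1 + (e - 1) * mu > 0" using assms by (smt (verit) mult_nonneg_nonneg)
  have q: "e * th + (1 - th) = 1 + (e - 1) * th" "e * mu + (1 - mu) = 1 + (e - 1) * mu" by (simp_all add: algebra_simps)
  show ?thesis unfolding q by (rule tangent_identity0[OF p1 p2 refl refl])
qed

lemma tangent_bounds:
  fixes e mu th :: real
  assumes "e \<ge> 1" "0 \<le> th" "th \<le> 1" "0 \<le> mu" "mu \<le> 1"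
  defines "K \<equiv> (e - 1) * e / (1 + (e - 1) * mu)^2"
  shows "th * e / (e * th + (1 - th)) \<le> mu * e / (e * mu + (1 - mu)) + e / (1 + (e - 1) * mu)^2 * (th - mu)"
    "th * e / (e * th + (1 - th)) \<ge> mu * e / (e * mu + (1 - mu)) + e / (1 + (e - 1) * mu)^2 * (th - mu) - K * (th - mu)^2"
proof -
  have p1: "1 + (e - 1) * th \<ge> 1" using assms by (simp add: mult_nonneg_nonneg)
  then have p1': "1 + (e - 1) * th > 0" by linarith
  have p2: "1 + (e - 1) * mu > 0" using assms by (smt (verit) mult_nonneg_nonneg)
  let ?R = "(e - 1) * e * (th - mu)^2 / ((1 + (e - 1) * th) * (1 + (e - 1) * mu)^2)"
  have R0: "?R \<ge> 0" using assms p1' p2 by (intro divide_nonneg_pos mult_nonneg_nonneg mult_pos_pos) auto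
  have RK: "?R \<le> K * (th - mu)^2"
  proof -
    have "?R = K * (th - mu)^2 / (1 + (e - 1) * th)" unfolding K_def by (simp add: field_simps)
    also have "\<dots> \<le> K * (th - mu)^2"
    proof -
      have "K \<ge> 0" unfolding K_def using assms p2 by (intro divide_nonneg_pos mult_nonneg_nonneg) auto
      then have X: "K * (th - mu)^2 \<ge> 0" by simp
      show ?thesis using divide_left_mono[OF p1 X] p1' by simp
    qed
    finally show ?thesis .
  qed
  note ti = tangent_identity[OF assms(1-5)]
  show "th * e / (e * th + (1 - th)) \<le> mu * e / (e * mu + (1 - mu)) + e / (1 + (e - 1) * mu)^2 * (th - mu)"
    using ti R0 by linarith
  show "th * e / (e * th + (1 - th)) \<ge> mu * e / (e * mu + (1 - mu)) + e / (1 + (e - 1) * mu)^2 * (th - mu) - K * (th - mu)^2"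
    using ti RK by linarith
qed

lemma quad_rewrite:
  fixes Fm c K N k mu :: real
  assumes "N > 0"
  shows "(Fm - c * mu - K * mu^2) + (c / N + 2 * K * mu / N) * k + (- K / N^2) * k^2
       = Fm + c * (k / N - mu) - K * (k / N - mu)^2"
  using assms by (simp add: field_simps power2_eq_square)

lemma quad_eval1:
  fixes Fm c N mu :: real
  assumes "N > 0"
  shows "(Fm - c * mu) + (c / N) * (N * mu) + 0 * (N * mu * (1 - mu) + N^2 * mu^2) = Fm"
  using assms by (simp add: field_simps)

lemma quad_eval2:
  fixes Fm c K N mu :: real
  assumes "N > 0"
  shows "(Fm - c * mu - K * mu^2) + (c / N + 2 * K * mu / N) * (N * mu) + (- K / N^2) * (N * mu * (1 - mu) + N^2 * mu^2)
     = Fm - K * mu * (1 - mu) / N"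
  using assms by (simp add: field_simps power2_eq_square)

lemma binom_bounds:
  fixes e mu :: real
  assumes "e \<ge> 1" "0 \<le> mu" "mu \<le> 1" "N > 0"
  defines "F \<equiv> (\<lambda>\<theta>. \<theta> * e / (e * \<theta> + (1 - \<theta>)))"
  defines "K \<equiv> (e - 1) * e / (1 + (e - 1) * mu)^2"
  shows "binom_exp N mu F \<le> F mu" "binom_exp N mu F \<ge> F mu - K * mu * (1 - mu) / real N"
proof -
  let ?c = "e / (1 + (e - 1) * mu)^2"
  have ab: "mu + (1 - mu) = 1" by simp
  have Npos: "real N > 0" using assms by simp
  have th: "0 \<le> real k / real N" "real k / real N \<le> 1" if "k \<le> N" for k
    using that Npos by (auto simp: divide_le_eq)
  have "binom_exp N mu F \<le> bsum N mu (1 - mu) (\<lambda>k. (F mu - ?c * mu) + (?c / real N) * real k + 0 * (real k)^2)"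
    unfolding binom_exp_bsum
  proof (rule bsum_mono)
    fix k assume "k \<le> N"
    have "F (real k / real N) \<le> F mu + ?c * (real k / real N - mu)"
      unfolding F_def using tangent_bounds(1)[OF assms(1) th[OF \<open>k \<le> N\<close>] assms(2,3)] by simp
    also have "\<dots> = (F mu - ?c * mu) + (?c / real N) * real k + 0 * (real k)^2"
      by (simp add: algebra_simps divide_inverse)
    finally show "F (real k / real N) \<le> (F mu - ?c * mu) + (?c / real N) * real k + 0 * (real k)^2" .
  qed (use assms in auto)
  also have "\<dots> = F mu"
    unfolding bsum_quad[OF ab] by (rule quad_eval1[OF Npos])
  finally show "binom_exp N mu F \<le> F mu" .
  have "bsum N mu (1 - mu) (\<lambda>k. (F mu - ?c * mu - K * mu^2) + (?c / real N + 2 * K * mu / real N) * real k + (- K / (real N)^2) * (real k)^2)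
      \<le> binom_exp N mu F"
    unfolding binom_exp_bsum
  proof (rule bsum_mono)
    fix k assume "k \<le> N"
    have "(F mu - ?c * mu - K * mu^2) + (?c / real N + 2 * K * mu / real N) * real k + (- K / (real N)^2) * (real k)^2
       = F mu + ?c * (real k / real N - mu) - K * (real k / real N - mu)^2"
      by (rule quad_rewrite[OF Npos])
    also have "\<dots> \<le> F (real k / real N)"
      unfolding F_def K_def using tangent_bounds(2)[OF assms(1) th[OF \<open>k \<le> N\<close>] assms(2,3)] by simp
    finally show "(F mu - ?c * mu - K * mu^2) + (?c / real N + 2 * K * mu / real N) * real k + (- K / (real N)^2) * (real k)^2
       \<le> F (real k / real N)" .
  qed (use assms in auto)
  moreover have "bsum N mu (1 - mu) (\<lambda>k. (F mu - ?c * mu - K * mu^2) + (?c / real N + 2 * K * mu / real N) * real k + (- K / (real N)^2) * (real k)^2)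
     = F mu - K * mu * (1 - mu) / real N"
    unfolding bsum_quad[OF ab] by (rule quad_eval2[OF Npos])
  ultimately show "binom_exp N mu F \<ge> F mu - K * mu * (1 - mu) / real N" by simp
qed

lemma final_ineq:
  fixes d s e mu p p' N lam :: real
  assumes d2: "d \<ge> 2" and s1: "1 \<le> s" and sD: "s \<le> d - 1" and e1: "e > 1"
    and mu: "mu = s / d" and p: "p = mu * e / (e * mu + (1 - mu))"
    and lo: "p - (e - 1) * e / (1 + (e - 1) * mu)^2 * mu * (1 - mu) / N \<le> p'" and hi: "p' \<le> p"
    and lam: "lam > 0" and N1: "N \<ge> 2 * e / lam" and N2: "N \<ge> e * (1 + lam) / lam"
  shows "d * p - s > 0" "d * p' - s > 0"
    "(d - 1) * (s * (d - 1) - s^2 + 2 * s * p' - d * p'^2) / (d * p' - s)^2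
     \<le> (1 + 4 * lam + 5 * lam^2 + 2 * lam ^ 3) * ((d - 1) * (s * (d - 1) - s^2 + 2 * s * p - d * p^2) / (d * p - s)^2)"
proof -
  define a where "a = e - 1"
  define v where "v = 1 + a * mu"
  define D where "D = d - 1"
  define K where "K = (e - 1) * e / (1 + (e - 1) * mu)^2"
  define A where "A = d * p - s"
  define A' where "A' = d * p' - s"
  define \<delta> where "\<delta> = p - p'"
  define g where "g = (\<lambda>x. s * (d - 1) - s^2 + 2 * s * x - d * x^2)"
  have a0: "a > 0" unfolding a_def using e1 by simp
  have dpos: "d > 0" using d2 by simp
  have mu0: "mu > 0" unfolding mu using s1 dpos by simp
  have mu1: "mu < 1" unfolding mu using sD dpos by simp
  have v1: "v \<ge> 1" unfolding v_def using a0 mu0 by simp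
  have vpos: "v > 0" using v1 by simp
  have Npos: "N > 0" using N2 e1 lam by (smt (verit) divide_pos_pos mult_pos_pos)
  have sd: "s = d * mu" unfolding mu using dpos by simp
  have pv: "p = e * mu / v" unfolding p v_def a_def by (simp add: algebra_simps)
  have Kv: "K = a * e / v^2" unfolding K_def v_def a_def ..
  have Aeq: "A = d * mu * a * (1 - mu) / v"
    unfolding A_def pv sd using vpos unfolding v_def a_def by (simp add: field_simps)
  have Apos: "A > 0" unfolding Aeq using dpos mu0 mu1 a0 vpos by simp
  have del0: "\<delta> \<ge> 0" unfolding \<delta>_def using hi by simp
  have del1: "\<delta> \<le> K * mu * (1 - mu) / N" unfolding \<delta>_def K_def using lo by simp
  have c1: "d * (K * mu * (1 - mu) / N) = (e / N) * (A / v)"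
    unfolding Kv Aeq using vpos Npos by (simp add: field_simps power2_eq_square)
  have "A / v \<le> A" using Apos v1 by (simp add: divide_le_eq mult_le_cancel_left1)
  then have "d * (K * mu * (1 - mu) / N) \<le> (e / N) * A" unfolding c1 using e1 Npos
    by (intro mult_left_mono) auto
  moreover have "e / N \<le> lam / (1 + lam)"
    using N2 lam Npos e1 by (simp add: field_simps)
  ultimately have "d * (K * mu * (1 - mu) / N) \<le> lam / (1 + lam) * A"
    using Apos by (smt (verit) mult_right_mono)
  moreover have "d * \<delta> \<le> d * (K * mu * (1 - mu) / N)" by (rule mult_left_mono[OF del1]) (use dpos in simp)
  ultimately have dd: "d * \<delta> \<le> lam / (1 + lam) * A" by linarith
  have A'eq: "A' = A - d * \<delta>" unfolding A'_def A_def \<delta>_def by (simp add: algebra_simps)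
  have A'ge: "A' \<ge> A / (1 + lam)"
  proof -
    have "A / (1 + lam) = A - lam / (1 + lam) * A" using lam by (simp add: field_simps)
    then show ?thesis unfolding A'eq using dd by linarith
  qed
  have A'pos: "A' > 0" using A'ge Apos lam by (smt (verit) divide_pos_pos)
  show "d * p - s > 0" using Apos unfolding A_def .
  show "d * p' - s > 0" using A'pos unfolding A'_def .
  have c3: "g p' \<le> g p + 2 * \<delta> * A"
  proof -
    have "g p' - g p = \<delta> * (d * (p + p') - 2 * s)" unfolding g_def \<delta>_def by (simp add: algebra_simps power2_eq_square)
    also have "\<dots> \<le> \<delta> * (2 * A)" unfolding A_def using del0 hi dpos
      by (intro mult_left_mono) auto
    finally show ?thesis by simp
  qed
  have p1: "p \<le> 1" unfolding pv using vpos mu1 mu0 e1 unfolding v_def a_def by (simp add: field_simps)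
  have pp: "p * (1 - p) = e * mu * (1 - mu) / v^2"
    unfolding pv using vpos unfolding v_def a_def by (simp add: field_simps power2_eq_square)
  have ppos: "p * (1 - p) > 0" unfolding pp using e1 mu0 mu1 vpos by simp
  have c4: "g p \<ge> D * (p * (1 - p))"
  proof -
    have p0: "p \<ge> 0" unfolding pv using e1 mu0 vpos by simp
    have "g p = (s - p) * (D - (s - p)) + D * (p * (1 - p))" unfolding g_def D_def by (simp add: algebra_simps power2_eq_square)
    moreover have "(s - p) * (D - (s - p)) \<ge> 0" using p0 p1 s1 sD ppos unfolding D_def
      by (intro mult_nonneg_nonneg) (auto simp: mult_pos_pos)
    ultimately show ?thesis by linarith
  qed
  have Dpos: "D > 0" unfolding D_def using d2 by simp
  have gpos: "g p > 0" using c4 Dpos ppos by (smt (verit) mult_pos_pos)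
  define T where "T = a * d * (1 - mu) * (a * mu / v)"
  have c5a: "K * mu * (1 - mu) * A = p * (1 - p) * T"
    unfolding Kv Aeq pp T_def using vpos by (simp add: field_simps power2_eq_square)
  have amv: "a * mu / v \<le> 1" using vpos unfolding v_def by simp
  have T2: "T \<le> 2 * a * D"
  proof -
    have "T \<le> a * d * (1 - mu) * 1" unfolding T_def using amv a0 dpos mu1
      by (intro mult_left_mono) auto
    also have "\<dots> \<le> a * (2 * D)"
    proof -
      have "d * mu > 0" using dpos mu0 by simp
      then have "d * (1 - mu) \<le> 2 * D" unfolding D_def using d2 by (simp add: algebra_simps)
      then have "a * (d * (1 - mu)) \<le> a * (2 * D)" using a0 by (intro mult_left_mono) auto
      then show ?thesis by (simp add: mult.assoc)
    qed
    finally show ?thesis by simp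
  qed
  have c5b: "T / N \<le> lam * D"
  proof -
    have "T / N \<le> 2 * a * D / N" using T2 Npos by (simp add: divide_right_mono)
    also have "\<dots> \<le> lam * D"
    proof -
      have "2 * a \<le> lam * N" using N1 lam e1 unfolding a_def by (simp add: field_simps)
      then show ?thesis using Dpos Npos by (simp add: field_simps mult_right_mono)
    qed
    finally show ?thesis .
  qed
  have c5: "2 * \<delta> * A \<le> 2 * lam * g p"
  proof -
    have "\<delta> * A \<le> K * mu * (1 - mu) / N * A" by (rule mult_right_mono[OF del1]) (use Apos in simp)
    also have "\<dots> = p * (1 - p) * (T / N)" using c5a by (simp add: field_simps)
    also have "\<dots> \<le> p * (1 - p) * (lam * D)" by (rule mult_left_mono[OF c5b]) (use ppos in simp)
    also have "\<dots> = lam * (D * (p * (1 - p)))" by (simp add: algebra_simps)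
    also have "\<dots> \<le> lam * g p" by (rule mult_left_mono[OF c4]) (use lam in simp)
    finally show ?thesis by simp
  qed
  have gp': "g p' \<le> (1 + 2 * lam) * g p" using c3 c5 by (simp add: algebra_simps)
  have Asq: "1 / A'^2 \<le> (1 + lam)^2 / A^2"
  proof -
    have "A / (1 + lam) > 0" using Apos lam by simp
    then have "(A / (1 + lam))^2 \<le> A'^2" using A'ge by (intro power_mono) auto
    then have "1 / A'^2 \<le> 1 / (A / (1 + lam))^2" using \<open>A / (1 + lam) > 0\<close> A'pos
      by (intro divide_left_mono mult_pos_pos) auto
    then show ?thesis by (simp add: power_divide)
  qed
  have "D * g p' / A'^2 \<le> D * ((1 + 2 * lam) * g p) / A'^2"
    using gp' Dpos A'pos by (intro divide_right_mono mult_left_mono) auto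
  also have "\<dots> = D * ((1 + 2 * lam) * g p) * (1 / A'^2)" by simp
  also have "\<dots> \<le> D * ((1 + 2 * lam) * g p) * ((1 + lam)^2 / A^2)"
    using Asq Dpos gpos lam by (intro mult_left_mono) auto
  also have "\<dots> = (1 + 4 * lam + 5 * lam^2 + 2 * lam ^ 3) * (D * g p / A^2)"
    by (simp add: field_simps power2_eq_square power3_eq_cube)
  finally show "(d - 1) * (s * (d - 1) - s^2 + 2 * s * p' - d * p'^2) / (d * p' - s)^2
     \<le> (1 + 4 * lam + 5 * lam^2 + 2 * lam ^ 3) * ((d - 1) * (s * (d - 1) - s^2 + 2 * s * p - d * p^2) / (d * p - s)^2)"
    unfolding D_def g_def A_def A'_def .
qed

lemma alph_Phi0:
  fixes s d p D A :: real
  assumes "D \<noteq> 0" "A \<noteq> 0"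
  shows "(s * (1 - 2 * ((s - p) / D)) + d * ((s - p) / D)^2) / (A / D)^2 + 2 * ((s - p) / D) / (A / D) + 1 - 2 / (A / D) * p
     = (s * D^2 - 2 * s * D * (s - p) + d * (s - p)^2 + 2 * (s - p) * A + A^2 - 2 * p * D * A) / A^2"
  using assms by (simp add: field_simps power2_eq_square)

lemma alph_Phi:
  fixes d s :: nat and p m b :: real
  assumes "d \<ge> 2" "real d * p - real s \<noteq> 0" "b = (real s - p) / (real d - 1)" "m = p - b"
  shows "alph d s m b - 2 / m * p
     = (real d - 1) * (real s * (real d - 1) - (real s)^2 + 2 * real s * p - real d * p^2) / (real d * p - real s)^2"
proof -
  have D: "real d - 1 > 0" using assms by simp
  have m: "m = (real d * p - real s) / (real d - 1)" unfolding assms(4,3) using D by (simp add: field_simps)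
  have "alph d s m b - 2 / m * p = (real s * (real d - 1)^2 - 2 * real s * (real d - 1) * (real s - p) + real d * (real s - p)^2
      + 2 * (real s - p) * (real d * p - real s) + (real d * p - real s)^2 - 2 * p * (real d - 1) * (real d * p - real s)) / (real d * p - real s)^2"
    unfolding alph_def m assms(3) using alph_Phi0[where s="real s" and d="real d" and p=p and D="real d - 1" and A="real d * p - real s"] D assms(2)
    by simp
  also have "real s * (real d - 1)^2 - 2 * real s * (real d - 1) * (real s - p) + real d * (real s - p)^2
      + 2 * (real s - p) * (real d * p - real s) + (real d * p - real s)^2 - 2 * p * (real d - 1) * (real d * p - real s)
      = (real d - 1) * (real s * (real d - 1) - (real s)^2 + 2 * real s * p - real d * p^2)"
    by (simp add: algebra_simps power2_eq_square)
  finally show ?thesis .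
qed

lemma frac_cancel:
  fixes x y d :: real
  assumes "d \<noteq> 0"
  shows "(x / d) / (y / d) = x / y"
  using assms by (cases "y = 0") (simp_all add: field_simps)

lemma p_simple:
  fixes d s e :: real
  assumes "d > 0"
  shows "s / d * e / (e * (s / d) + (1 - s / d)) = s * e / (s * e + d - s)"
proof -
  have 1: "e * (s / d) + (1 - s / d) = (s * e + d - s) / d" using assms by (simp add: field_simps)
  have 2: "s / d * e = (s * e) / d" by simp
  show ?thesis unfolding 1 2 using frac_cancel assms by simp
qed

lemma p_ss_eq:
  fixes cy cn M d s e :: real
  assumes "cy > 0" "s > 0" "d > s" "cy * d = M * s" "cy + cn = M" "e > 0"
  shows "cy * e / (cy * e + cn) = s / d * e / (e * (s / d) + (1 - s / d))"
proof -
  have cn: "cn = cy * (d - s) / s"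
  proof -
    have "cn = M - cy" using assms(5) by linarith
    then have "cn * s = cy * d - cy * s" using assms(4) by (simp add: left_diff_distrib)
    then show ?thesis using assms by (simp add: field_simps)
  qed
  define T where "T = s * e + d - s"
  have pos: "T > 0" unfolding T_def using assms by (smt (verit) mult_pos_pos)
  have den: "cy * e + cn = cy * T / s" unfolding cn T_def using assms(2) by (simp add: field_simps)
  have 1: "cy * e / (cy * e + cn) = s * e / T"
    unfolding den using assms(1,2) pos by (simp add: field_simps)
  have 2: "s / d * e / (e * (s / d) + (1 - s / d)) = s * e / T"
    unfolding T_def using assms by (intro p_simple) auto
  show ?thesis unfolding 1 2 ..
qed

lemma b_ss_eq:
  fixes d s e :: real
  assumes "s > 0" "d > s" "e > 0" "d > 1"
  defines "p \<equiv> s / d * e / (e * (s / d) + (1 - s / d))"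
  shows "s * ((s - 1) * e + (d - s)) / ((d - 1) * (s * (e - 1) + d)) = (s - p) / (d - 1)"
    "s * (d - s) * (e - 1) / ((d - 1) * (s * (e - 1) + d)) = p - (s - p) / (d - 1)"
proof -
  define T where "T = s * e + d - s"
  have pos: "T > 0" unfolding T_def using assms by (smt (verit) mult_pos_pos)
  have D: "d - 1 > 0" using assms by simp
  have p: "p = s * e / T" unfolding p_def T_def using assms by (intro p_simple) auto
  have q: "s * (e - 1) + d = T" unfolding T_def by (simp add: algebra_simps)
  have r: "(s - 1) * e + (d - s) = T - e" unfolding T_def by (simp add: algebra_simps)
  show "s * ((s - 1) * e + (d - s)) / ((d - 1) * (s * (e - 1) + d)) = (s - p) / (d - 1)"
    unfolding p q r using pos D by (simp add: field_simps)
  have "p - (s - p) / (d - 1) = (s * e * d - s * T) / ((d - 1) * T)"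
    unfolding p using pos D by (simp add: field_simps)
  also have "s * e * d - s * T = s * (d - s) * (e - 1)" unfolding T_def by (simp add: algebra_simps)
  finally show "s * (d - s) * (e - 1) / ((d - 1) * (s * (e - 1) + d)) = p - (s - p) / (d - 1)"
    unfolding q by simp
qed

theorem theorem11:
  fixes d N j :: nat and \<epsilon> lam :: real
  assumes "d \<ge> 2" and "\<epsilon> \<ge> 1" and "lam > 0"
    and "real N \<ge> 2 * (exp \<epsilon> + 3)\<^sup>2 * (1 + lam)\<^sup>2 / (0.24\<^sup>2 * lam\<^sup>2)
                   * ln (8 * (1 + lam) / (0.24 * lam))"
    and "j < d"
  shows "E_mrc d (ss_size d \<epsilon>) \<epsilon> N j
           \<le> (1 + 4 * lam + 5 * lam\<^sup>2 + 2 * lam ^ 3) * E_ss d (ss_size d \<epsilon>) \<epsilon> j"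
proof -
  define e where "e = exp \<epsilon>"
  define s where "s = ss_size d \<epsilon>"
  have e1: "e > 1" unfolding e_def using assms(2) by simp
  have lam: "lam > 0" by fact
  have eps0: "\<epsilon> \<ge> 0" using assms(2) by simp
  define x where "x = real d / (1 + e)"
  have x0: "x > 0" unfolding x_def using assms(1) e1 by simp
  have xd: "x \<le> real (d - 1)"
  proof -
    have "real d \<le> (real d - 1) * (1 + e)"
    proof -
      have "(real d - 1) * (1 + e) \<ge> (real d - 1) * 2" using assms(1) e1 by (intro mult_left_mono) auto
      moreover have "real d \<ge> 2" using assms(1) by simp
      moreover have "(real d - 1) * 2 = 2 * real d - 2" by (simp add: algebra_simps)
      ultimately show ?thesis by linarith
    qed
    then show ?thesis unfolding x_def using e1 assms(1) by (simp add: divide_le_eq of_nat_diff)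
  qed
  have sx: "s = nat \<lceil>x\<rceil>" unfolding s_def ss_size_def x_def e_def ..
  have s1: "1 \<le> s" unfolding sx using x0 by (simp add: Suc_le_eq)
  have sD: "s \<le> d - 1"
  proof -
    have "\<lceil>x\<rceil> \<le> int (d - 1)" using ceiling_le[of x "int (d - 1)"] xd by simp
    then show ?thesis unfolding sx using xd by simp
  qed
  have sd: "s < d" using sD assms(1) by simp
  have sDr: "real s \<le> real d - 1" using sD assms(1) by (simp add: of_nat_diff)
  define Y where "Y = (e + 3) * (1 + lam) / lam"
  define L where "L = ln (8 * (1 + lam) / (0.24 * lam))"
  have L1: "L \<ge> 1"
  proof -
    have "8 * (1 + lam) / (0.24 * lam) \<ge> 8 / 0.24" using lam by (simp add: field_simps)
    moreover have "exp 1 \<le> (8 / 0.24 :: real)" using exp_le by simp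
    ultimately have "exp 1 \<le> 8 * (1 + lam) / (0.24 * lam)" by linarith
    then have "ln (exp 1) \<le> L" unfolding L_def using lam by (subst ln_le_cancel_iff) auto
    then show ?thesis by simp
  qed
  have Y3: "Y \<ge> 3"
  proof -
    have "(e + 3) * (1 + lam) = e + 3 + e * lam + 3 * lam" by (simp add: algebra_simps)
    moreover have "e * lam > 0" using e1 lam by simp
    ultimately have "(e + 3) * (1 + lam) \<ge> 3 * lam" using e1 by linarith
    then show ?thesis unfolding Y_def using lam by (simp add: field_simps)
  qed
  have NY: "real N \<ge> Y^2"
  proof -
    have "2 * (exp \<epsilon> + 3)\<^sup>2 * (1 + lam)\<^sup>2 / (0.24\<^sup>2 * lam\<^sup>2) = (2 / 0.24^2) * Y^2"
      unfolding Y_def e_def using lam by (simp add: field_simps power2_eq_square)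
    moreover have "(2 / 0.24^2) * Y^2 * L \<ge> Y^2"
    proof -
      have "(2 / 0.24^2) * Y^2 * L \<ge> 1 * Y^2 * 1"
        using L1 by (intro mult_mono) (auto simp: power2_eq_square)
      then show ?thesis by simp
    qed
    ultimately show ?thesis using assms(4) unfolding L_def by simp
  qed
  have YA: "Y \<ge> e * (1 + lam) / lam" unfolding Y_def using lam by (simp add: field_simps)
  have YB: "Y \<ge> e / lam"
  proof -
    have "e / lam \<le> e * (1 + lam) / lam" using lam e1 by (simp add: field_simps)
    then show ?thesis using YA by linarith
  qed
  have "Y^2 \<ge> 3 * Y" using Y3 by (simp add: power2_eq_square mult_right_mono)
  have N2: "real N \<ge> e * (1 + lam) / lam" using NY \<open>Y^2 \<ge> 3 * Y\<close> YA Y3 by linarith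
  have N1: "real N \<ge> 2 * e / lam"
  proof -
    have "2 * e / lam \<le> 3 * (e / lam)" using e1 lam by (simp add: field_simps)
    then show ?thesis using NY \<open>Y^2 \<ge> 3 * Y\<close> YB by linarith
  qed
  have Npos: "N > 0"
  proof -
    have "e * (1 + lam) / lam > 0" using e1 lam by simp
    then show ?thesis using N2 by simp
  qed
  define mu where "mu = real s / real d"
  define p where "p = mu * e / (e * mu + (1 - mu))"
  define F where "F = (\<lambda>\<theta>::real. \<theta> * e / (e * \<theta> + (1 - \<theta>)))"
  define P where "P = binom_exp N mu F"
  have dpos: "real d > 0" using assms(1) by simp
  have mu0: "0 \<le> mu" "mu \<le> 1" unfolding mu_def using sd by auto
  note cf = choose_facts[OF s1 sd]
  have pF: "F mu = p" unfolding F_def p_def ..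
  have Pb: "P \<le> p" "P \<ge> p - (e - 1) * e / (1 + (e - 1) * mu)^2 * mu * (1 - mu) / real N"
    using binom_bounds[of e mu N] e1 mu0 Npos unfolding P_def pF[symmetric] F_def by auto
  have d2r: "real d \<ge> 2" using assms(1) by simp
  have s1r: "1 \<le> real s" using s1 by simp
  note fi = final_ineq[OF d2r s1r sDr e1 mu_def p_def Pb(2) Pb(1) lam N1 N2]
  have pss: "real ((d-1) choose (s-1)) * e / (real ((d-1) choose (s-1)) * e + real ((d-1) choose s)) = p"
    unfolding p_def mu_def
    by (rule p_ss_eq) (use cf s1 sd e1 in \<open>auto simp: mult.commute\<close>)
  have bss: "b_ss d s \<epsilon> = (real s - p) / (real d - 1)" and mss: "m_ss d s \<epsilon> = p - b_ss d s \<epsilon>"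
    unfolding b_ss_def m_ss_def e_def[symmetric] p_def mu_def
    using b_ss_eq[of "real s" "real d" e] s1 sd e1 assms(1) by (auto simp: mult.commute)
  have Ess: "E_ss d s \<epsilon> j = (real d - 1) * (real s * (real d - 1) - (real s)^2 + 2 * real s * p - real d * p^2) / (real d * p - real s)^2"
    unfolding E_ss_closed[OF assms(5) s1 sd] e_def[symmetric] pss
    by (rule alph_Phi[OF assms(1) _ bss mss]) (use fi in simp)
  have bsum_s: "binom_exp N mu (\<lambda>\<theta>. real s - exp \<epsilon> * \<theta> / (exp \<epsilon> * \<theta> + (1 - \<theta>))) = real s - P"
  proof -
    have "binom_exp N mu (\<lambda>\<theta>. real s - exp \<epsilon> * \<theta> / (exp \<epsilon> * \<theta> + (1 - \<theta>)))
        = bsum N mu (1 - mu) (\<lambda>k. real s + (-1) * F (real k / real N))"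
      unfolding binom_exp_bsum F_def e_def by (intro bsum_cong) (simp add: mult.commute)
    also have "\<dots> = real s - P" unfolding bsum_add bsum_cmult bsum_const[of mu "1 - mu", simplified]
      P_def binom_exp_bsum by simp
    finally show ?thesis .
  qed
  have bmrc: "b_mrc d s \<epsilon> N = (real s - P) / (real d - 1)"
    unfolding b_mrc_def mu_def[symmetric] bsum_s by simp
  have mmrc: "m_mrc d s \<epsilon> N = P - b_mrc d s \<epsilon> N"
    unfolding m_mrc_def mu_def[symmetric] bsum_s
    by (simp add: bmrc P_def F_def e_def)
  have Emrc: "E_mrc d s \<epsilon> N j = (real d - 1) * (real s * (real d - 1) - (real s)^2 + 2 * real s * P - real d * P^2) / (real d * P - real s)^2"
    unfolding E_mrc_closed[OF assms(5) s1 sd Npos eps0] mu_def[symmetric] e_def[symmetric] F_def[symmetric] P_def[symmetric]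
    using assms(2)
    by (intro alph_Phi[OF assms(1) _ bmrc mmrc]) (use fi in simp)
  show ?thesis
    unfolding s_def[symmetric] Ess Emrc using fi by simp
qed

end
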